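(* Let $G$ be a group, $n\ge 2$, $X=\{x_1,\dots,x_n\}$, fix a function $X\to G$, and let $(\mathcal X_l)_{l\ge1}$ be a non-backtracking random walk on $(G,X)$. Then the Markov chain $(\mathcal X_l)$ on $\Omega=G\times\{\pm1,\dots,\pm n\}$ is irreducible if and only if $G$ is generated by (the images of) $x_1,\dots,x_n$ but $G$ is not a free group freely generated by $x_1,\dots,x_n$ (i.e. the induced homomorphism $F(X)\to G$ is surjective but not injective).
   Context: Let $G$ be a group, $X=\{x_1,\dots,x_n\}$ a set with $n\ge 2$, and fix a function $X\to G$; we identify each $x_i$ with its image in $G$. Let $\Omega=G\times\{\pm1,\pm2,\dots,\pm n\}$, with elements written $(g,\epsilon i)$, $g\in G$, $\epsilon=\pm1$, $i\in\{1,\dots,n\}$. A non-backtracking random walk on $(G,X)$ is a Markov chain $(\mathcal X_l)_{l\ge1}$ on $\Omega$ with transition probabilities $\mathbb P(\mathcal X_{l+1}=(g,\epsilon i)\mid \mathcal X_l=(h,\epsilon' j))=\alpha_{\epsilon' j,\epsilon i}$ if $g=hx_i^{\epsilon}$ and $\epsilon i\neq -\epsilon' j$, and $=0$ otherwise, where the $\alpha_{\epsilon' j,\epsilon i}$ are positive constants with $\sum_{\epsilon i\neq-\epsilon' j}\alpha_{\epsilon' j,\epsilon i}=1$ for each $\epsilon' j$; and with initial distribution $\mathbb P(\mathcal X_1=(g,\epsilon i))=\beta_{\epsilon i}$ if $g=x_i^{\epsilon}$ and $0$ otherwise, for positive constants $\beta_{\epsilon i}$ summing to $1$. Irreducibility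 and period refer to the Markov chain on the full state space $\Omega$. *)

theory Defs
  imports Complex_Main "HOL-Algebra.Generated_Groups"
begin

text \<open>Signed indices: the letter x_i^{+1} is encoded by the integer i, x_i^{-1} by -i.\<close>
definition signed_idx :: "nat \<Rightarrow> int set" where
  "signed_idx n = {k. 1 \<le> \<bar>k\<bar> \<and> \<bar>k\<bar> \<le> int n}"

definition letter :: "('a, 'b) monoid_scheme \<Rightarrow> (nat \<Rightarrow> 'a) \<Rightarrow> int \<Rightarrow> 'a" where
  "letter G x k = (if 0 < k then x (nat k) else inv\<^bsub>G\<^esub> (x (nat (- k))))"

definition nbrw_trans ::
  "('a, 'b) monoid_scheme \<Rightarrow> (nat \<Rightarrow> 'a) \<Rightarrow> (int \<Rightarrow> int \<Rightarrow> real) \<Rightarrow> ('a \<times> int) \<Rightarrow> ('a \<times> int) \<Rightarrow> real" where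
  "nbrw_trans G x \<alpha> s t =
     (if fst t = fst s \<otimes>\<^bsub>G\<^esub> letter G x (snd t) \<and> snd t \<noteq> - snd s
      then \<alpha> (snd s) (snd t) else 0)"

definition nbrw_space :: "('a, 'b) monoid_scheme \<Rightarrow> nat \<Rightarrow> ('a \<times> int) set" where
  "nbrw_space G n = carrier G \<times> signed_idx n"

text \<open>Irreducibility of a Markov chain with state space S and transition probabilities P:
  every state leads to every state, i.e. for all a, b there is m with P^m(a,b) > 0, which
  (P being nonnegative) means a path of positive-probability transitions from a to b.\<close>
definition markov_irreducible :: "'s set \<Rightarrow> ('s \<Rightarrow> 's \<Rightarrow> real) \<Rightarrow> bool" where
  "markov_irreducible S P \<longleftrightarrow>
     (\<forall>a\<in>S. \<forall>b\<in>S. (a, b) \<in> {(s, t). s \<in> S \<and> t \<in> S \<and> P s t > 0}\<^sup>*)"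

text \<open>The free group F(X), X = {x_1..x_n}, realised as the set of reduced words.\<close>
definition reduced_words :: "nat \<Rightarrow> int list set" where
  "reduced_words n = {w. set w \<subseteq> signed_idx n \<and>
                         (\<forall>i. Suc i < length w \<longrightarrow> w ! Suc i \<noteq> - (w ! i))}"

definition word_eval :: "('a, 'b) monoid_scheme \<Rightarrow> (nat \<Rightarrow> 'a) \<Rightarrow> int list \<Rightarrow> 'a" where
  "word_eval G x w = foldr (\<lambda>k acc. letter G x k \<otimes>\<^bsub>G\<^esub> acc) w \<one>\<^bsub>G\<^esub>"

definition freely_generated_by :: "('a, 'b) monoid_scheme \<Rightarrow> nat \<Rightarrow> (nat \<Rightarrow> 'a) \<Rightarrow> bool" where
  "freely_generated_by G n x \<longleftrightarrow>
     carrier G = generate G (x ` {1..n}) \<and> inj_on (word_eval G x) (reduced_words n)"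

end

theory Submission
  imports Defs
begin

lemma signed_idx_neg: "k \<in> signed_idx n \<Longrightarrow> - k \<in> signed_idx n"
  by (simp add: signed_idx_def)

lemma signed_idx_nz: "k \<in> signed_idx n \<Longrightarrow> k \<noteq> 0"
  by (auto simp: signed_idx_def)

lemma letter_carrier:
  assumes "group G" "\<And>i. i \<in> {1..n} \<Longrightarrow> x i \<in> carrier G" "k \<in> signed_idx n"
  shows "letter G x k \<in> carrier G"
proof -
  interpret G: group G by fact
  show ?thesis
  proof (cases "0 < k")
    case True
    then have "nat k \<in> {1..n}" using assms(3) by (auto simp: signed_idx_def)
    then show ?thesis using True assms(2) by (simp add: letter_def)
  next
    case False
    then have "nat (-k) \<in> {1..n}" using assms(3) by (auto simp: signed_idx_def)
    then show ?thesis using False assms(2) by (simp add: letter_def)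
  qed
qed

lemma letter_gen:
  assumes "group G" "\<And>i. i \<in> {1..n} \<Longrightarrow> x i \<in> carrier G" "k \<in> signed_idx n"
  shows "letter G x k \<in> generate G (x ` {1..n})"
proof (cases "0 < k")
  case True
  then have "nat k \<in> {1..n}" using assms(3) by (auto simp: signed_idx_def)
  then show ?thesis using True by (simp add: letter_def generate.incl)
next
  case False
  then have "nat (-k) \<in> {1..n}" using assms(3) by (auto simp: signed_idx_def)
  then show ?thesis using False by (simp add: letter_def generate.inv)
qed

lemma letter_neg:
  assumes "group G" "\<And>i. i \<in> {1..n} \<Longrightarrow> x i \<in> carrier G" "k \<in> signed_idx n"
  shows "letter G x (- k) = inv\<^bsub>G\<^esub> letter G x k"
proof -
  interpret G: group G by fact
  have k0: "k \<noteq> 0" using assms(3) signed_idx_nz by blast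
  show ?thesis
  proof (cases "0 < k")
    case True
    then show ?thesis by (simp add: letter_def)
  next
    case False
    then have "nat (-k) \<in> {1..n}" using assms(3) by (auto simp: signed_idx_def)
    then show ?thesis using False k0 assms(2) by (simp add: letter_def)
  qed
qed

lemma word_eval_Nil [simp]: "word_eval G x [] = \<one>\<^bsub>G\<^esub>"
  by (simp add: word_eval_def)

lemma word_eval_Cons [simp]: "word_eval G x (a # w) = letter G x a \<otimes>\<^bsub>G\<^esub> word_eval G x w"
  by (simp add: word_eval_def)

lemma word_eval_carrier:
  assumes "group G" "\<And>i. i \<in> {1..n} \<Longrightarrow> x i \<in> carrier G" "set w \<subseteq> signed_idx n"
  shows "word_eval G x w \<in> carrier G"
  using assms(3)
proof (induction w)
  case Nil
  then show ?case using group.is_monoid[OF assms(1)] by (simp add: monoid.one_closed)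
next
  case (Cons a w)
  interpret G: group G by fact
  show ?case using Cons letter_carrier[OF assms(1,2)] by simp
qed

lemma word_eval_gen:
  assumes "group G" "\<And>i. i \<in> {1..n} \<Longrightarrow> x i \<in> carrier G" "set w \<subseteq> signed_idx n"
  shows "word_eval G x w \<in> generate G (x ` {1..n})"
  using assms(3)
proof (induction w)
  case Nil
  then show ?case by (simp add: generate.one)
next
  case (Cons a w)
  then show ?case using letter_gen[OF assms(1,2)] by (simp add: generate.eng)
qed

lemma word_eval_append:
  assumes "group G" "\<And>i. i \<in> {1..n} \<Longrightarrow> x i \<in> carrier G" "set u \<subseteq> signed_idx n"
    "set v \<subseteq> signed_idx n"
  shows "word_eval G x (u @ v) = word_eval G x u \<otimes>\<^bsub>G\<^esub> word_eval G x v"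
  using assms(3)
proof (induction u)
  case Nil
  interpret G: group G by fact
  show ?case using word_eval_carrier[OF assms(1,2,4)] by simp
next
  case (Cons a u)
  interpret G: group G by fact
  show ?case using Cons word_eval_carrier[OF assms(1,2)] letter_carrier[OF assms(1,2)] assms(4)
    by (simp add: G.m_assoc)
qed

lemma word_eval_inv:
  assumes "group G" "\<And>i. i \<in> {1..n} \<Longrightarrow> x i \<in> carrier G" "set v \<subseteq> signed_idx n"
  shows "word_eval G x (rev (map uminus v)) = inv\<^bsub>G\<^esub> word_eval G x v"
  using assms(3)
proof (induction v)
  case Nil
  interpret G: group G by fact
  show ?case by simp
next
  case (Cons a v)
  interpret G: group G by fact
  have s: "set (rev (map uminus v)) \<subseteq> signed_idx n" "set [-a] \<subseteq> signed_idx n"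
    using Cons.prems signed_idx_neg by auto
  have "word_eval G x (rev (map uminus (a # v))) =
        word_eval G x (rev (map uminus v)) \<otimes>\<^bsub>G\<^esub> word_eval G x [-a]"
    using word_eval_append[OF assms(1,2) s] by simp
  also have "\<dots> = inv\<^bsub>G\<^esub> word_eval G x v \<otimes>\<^bsub>G\<^esub> inv\<^bsub>G\<^esub> letter G x a"
    using Cons letter_neg[OF assms(1,2)] letter_carrier[OF assms(1,2)] by simp
  also have "\<dots> = inv\<^bsub>G\<^esub> (letter G x a \<otimes>\<^bsub>G\<^esub> word_eval G x v)"
    using Cons letter_carrier[OF assms(1,2)] word_eval_carrier[OF assms(1,2)]
    by (simp add: G.inv_mult_group)
  finally show ?case by simp
qed

lemma reduced_words_alt:
  "reduced_words n = {w. set w \<subseteq> signed_idx n \<and> successively (\<lambda>a b. b \<noteq> - a) w}"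
  by (simp add: reduced_words_def successively_conv_nth)


lemma reduced_exists:
  assumes "group G" "\<And>i. i \<in> {1..n} \<Longrightarrow> x i \<in> carrier G"
  shows "set u \<subseteq> signed_idx n \<Longrightarrow> successively (\<lambda>a b. b \<noteq> - a) u \<Longrightarrow>
     set v \<subseteq> signed_idx n \<Longrightarrow> successively (\<lambda>a b. b \<noteq> - a) v \<Longrightarrow> u \<noteq> v \<Longrightarrow>
     word_eval G x u = word_eval G x v \<Longrightarrow>
     \<exists>r. r \<noteq> [] \<and> set r \<subseteq> signed_idx n \<and> successively (\<lambda>a b. b \<noteq> - a) r \<and>
         word_eval G x r = \<one>\<^bsub>G\<^esub>"
proof (induction u arbitrary: v rule: rev_induct)
  case Nil
  then show ?case by (metis word_eval_Nil)
next
  case (snoc a u)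
  interpret G: group G by fact
  show ?case
  proof (cases v rule: rev_exhaust)
    case Nil
    then show ?thesis using snoc.prems by (metis snoc_eq_iff_butlast word_eval_Nil)
  next
    case (snoc v' b)
    have su: "set u \<subseteq> signed_idx n" "set [a] \<subseteq> signed_idx n"
      using snoc.prems by auto
    have sv: "set v' \<subseteq> signed_idx n" "set [b] \<subseteq> signed_idx n"
      using snoc.prems snoc by auto
    have eu: "word_eval G x (u @ [a]) = word_eval G x u \<otimes>\<^bsub>G\<^esub> letter G x a"
      using word_eval_append[OF assms su] letter_carrier[OF assms] su by simp
    have ev: "word_eval G x (v' @ [b]) = word_eval G x v' \<otimes>\<^bsub>G\<^esub> letter G x b"
      using word_eval_append[OF assms sv] letter_carrier[OF assms] sv by simp
    show ?thesis
    proof (cases "a = b")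
      case True
      have "u \<noteq> v'" using snoc.prems(5) snoc True by simp
      moreover have "word_eval G x u = word_eval G x v'"
        using snoc.prems(6) snoc True eu ev word_eval_carrier[OF assms] su sv
          letter_carrier[OF assms] by simp
      moreover have "successively (\<lambda>a b. b \<noteq> - a) u" "successively (\<lambda>a b. b \<noteq> - a) v'"
        using snoc.prems(2,4) snoc by (simp_all add: successively_append_iff)
      ultimately show ?thesis using snoc.IH su sv by blast
    next
      case False
      define r where "r = (u @ [a]) @ rev (map uminus v)"
      have sr: "set (u @ [a]) \<subseteq> signed_idx n" "set (rev (map uminus v)) \<subseteq> signed_idx n"
        using snoc.prems signed_idx_neg by auto
      have "successively (\<lambda>a b. b \<noteq> - a) (rev (map uminus v))"
        using snoc.prems(4) by (simp add: successively_map) (metis (mono_tags, lifting) minus_equation_iff successively_mono)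
      then have "successively (\<lambda>a b. b \<noteq> - a) r"
        using snoc.prems(2) False snoc unfolding r_def
        by (simp add: successively_append_iff)
      moreover have "word_eval G x r = \<one>\<^bsub>G\<^esub>"
      proof -
        have "word_eval G x r = word_eval G x (u @ [a]) \<otimes>\<^bsub>G\<^esub> word_eval G x (rev (map uminus v))"
          unfolding r_def by (rule word_eval_append[OF assms sr])
        also have "\<dots> = word_eval G x v \<otimes>\<^bsub>G\<^esub> inv\<^bsub>G\<^esub> word_eval G x v"
          using word_eval_inv[OF assms snoc.prems(3)] snoc.prems(6) by simp
        also have "\<dots> = \<one>\<^bsub>G\<^esub>"
          using word_eval_carrier[OF assms snoc.prems(3)] by simp
        finally show ?thesis .
      qed
      moreover have "set r \<subseteq> signed_idx n" using sr r_def by auto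
      ultimately show ?thesis unfolding r_def by blast
    qed
  qed
qed


theorem mainTheorem1:
  fixes G :: "('a, 'b) monoid_scheme" and n :: nat and x :: "nat \<Rightarrow> 'a"
    and \<alpha> :: "int \<Rightarrow> int \<Rightarrow> real"
  assumes "group G"
    and "n \<ge> 2"
    and "\<And>i. i \<in> {1..n} \<Longrightarrow> x i \<in> carrier G"
    and "\<And>j k. j \<in> signed_idx n \<Longrightarrow> k \<in> signed_idx n \<Longrightarrow> k \<noteq> - j \<Longrightarrow> \<alpha> j k > 0"
    and "\<And>j. j \<in> signed_idx n \<Longrightarrow> (\<Sum>k\<in>signed_idx n - {- j}. \<alpha> j k) = 1"
  shows "markov_irreducible (nbrw_space G n) (nbrw_trans G x \<alpha>) \<longleftrightarrow>
           (carrier G = generate G (x ` {1..n}) \<and> \<not> freely_generated_by G n x)"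
proof -
  interpret G: group G by fact
  note gx = assms(1,3)
  define S where "S = signed_idx n"
  define E where "E = {(s, t). s \<in> nbrw_space G n \<and> t \<in> nbrw_space G n \<and> nbrw_trans G x \<alpha> s t > 0}"
  define red where "red = (\<lambda>w. set w \<subseteq> S \<and> successively (\<lambda>a b. b \<noteq> - a) (w::int list))"
  have lc: "letter G x k \<in> carrier G" if "k \<in> S" for k
    using letter_carrier[where G=G and n=n and x=x, OF gx] that S_def by blast
  have step: "((g, j), (g \<otimes>\<^bsub>G\<^esub> letter G x k, k)) \<in> E"
    if "g \<in> carrier G" "j \<in> S" "k \<in> S" "k \<noteq> - j" for g j k
    using that lc[OF that(3)] assms(4)[of j k]
    by (simp add: E_def nbrw_space_def nbrw_trans_def S_def)
  have path: "((g, j), (g \<otimes>\<^bsub>G\<^esub> word_eval G x w, last w)) \<in> E\<^sup>*"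
    if "g \<in> carrier G" "j \<in> S" "w \<noteq> []" "red w" "hd w \<noteq> - j" for g j w
    using that
  proof (induction w arbitrary: g j)
    case Nil
    then show ?case by simp
  next
    case (Cons a w)
    have aS: "a \<in> S" and wS: "set w \<subseteq> S" using Cons.prems(4) red_def by auto
    have st: "((g, j), (g \<otimes>\<^bsub>G\<^esub> letter G x a, a)) \<in> E"
      using step[of g j a] Cons.prems(1,2,5) aS by simp
    show ?case
    proof (cases "w = []")
      case True
      have "g \<otimes>\<^bsub>G\<^esub> word_eval G x [a] = g \<otimes>\<^bsub>G\<^esub> letter G x a" using lc[OF aS] by simp
      then show ?thesis using st True by simp
    next
      case False
      have "red w" "hd w \<noteq> - a" using Cons.prems(4) False
        by (auto simp: red_def successively_Cons)
      then have ih: "((g \<otimes>\<^bsub>G\<^esub> letter G x a, a),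
          ((g \<otimes>\<^bsub>G\<^esub> letter G x a) \<otimes>\<^bsub>G\<^esub> word_eval G x w, last w)) \<in> E\<^sup>*"
        using Cons.IH[of "g \<otimes>\<^bsub>G\<^esub> letter G x a" a] False aS Cons.prems(1) lc[OF aS] by blast
      have eq: "(g \<otimes>\<^bsub>G\<^esub> letter G x a) \<otimes>\<^bsub>G\<^esub> word_eval G x w
          = g \<otimes>\<^bsub>G\<^esub> word_eval G x (a # w)"
        using lc[OF aS] Cons.prems(1) word_eval_carrier[where G=G and n=n and x=x, OF gx] wS S_def
        by (simp add: G.m_assoc)
      have "((g, j), ((g \<otimes>\<^bsub>G\<^esub> letter G x a) \<otimes>\<^bsub>G\<^esub> word_eval G x w, last w)) \<in> E\<^sup>*"
        by (rule converse_rtrancl_into_rtrancl[OF st ih])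
      then show ?thesis using eq False by simp
    qed
  qed
  have bk: "t = s \<or> (\<exists>w. w \<noteq> [] \<and> red w \<and> hd w \<noteq> - snd s \<and> last w = snd t \<and>
                 fst t = fst s \<otimes>\<^bsub>G\<^esub> word_eval G x w)"
    if "(s, t) \<in> E\<^sup>*" "s \<in> nbrw_space G n" for s t
    using that(1)
  proof (induction rule: rtrancl_induct)
    case base
    then show ?case by simp
  next
    case (step y z)
    have yz: "fst z = fst y \<otimes>\<^bsub>G\<^esub> letter G x (snd z)" "snd z \<noteq> - snd y"
      "fst y \<in> carrier G" "snd z \<in> S"
      using step(2) by (auto simp: E_def nbrw_trans_def nbrw_space_def S_def split: if_splits)
    from step(3) show ?case
    proof
      assume "y = s"
      then show ?thesis using yz lc[OF yz(4)]
        by (intro disjI2 exI[of _ "[snd z]"]) (simp add: red_def)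
    next
      assume "\<exists>w. w \<noteq> [] \<and> red w \<and> hd w \<noteq> - snd s \<and> last w = snd y \<and>
                 fst y = fst s \<otimes>\<^bsub>G\<^esub> word_eval G x w"
      then obtain w where w: "w \<noteq> []" "red w" "hd w \<noteq> - snd s" "last w = snd y"
        "fst y = fst s \<otimes>\<^bsub>G\<^esub> word_eval G x w" by blast
      have sS: "fst s \<in> carrier G" using that(2) by (auto simp: nbrw_space_def)
      have wS: "set w \<subseteq> signed_idx n" using w(2) red_def S_def by simp
      have zS: "set [snd z] \<subseteq> signed_idx n" using yz(4) S_def by simp
      have "red (w @ [snd z])" using w yz by (simp add: red_def successively_append_iff)
      moreover have "fst z = fst s \<otimes>\<^bsub>G\<^esub> word_eval G x (w @ [snd z])"
        using yz(1) w(5) word_eval_append[where G=G and n=n and x=x, OF gx wS zS] lc[OF yz(4)] sS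
          word_eval_carrier[where G=G and n=n and x=x, OF gx wS] by (simp add: G.m_assoc)
      ultimately show ?thesis using w by (intro disjI2 exI[of _ "w @ [snd z]"]) simp
    qed
  qed
  have oneS: "1 \<in> S" "-1 \<in> S" "2 \<in> S" "-2 \<in> S" using assms(2) by (auto simp: S_def signed_idx_def)
  have Xc: "x ` {1..n} \<subseteq> carrier G" using assms(3) by auto
  have irr_iff: "markov_irreducible (nbrw_space G n) (nbrw_trans G x \<alpha>) \<longleftrightarrow>
      (\<forall>a\<in>nbrw_space G n. \<forall>b\<in>nbrw_space G n. (a, b) \<in> E\<^sup>*)"
    unfolding markov_irreducible_def E_def by simp
  show ?thesis
  proof
    assume irr: "markov_irreducible (nbrw_space G n) (nbrw_trans G x \<alpha>)"
    have o1: "(\<one>\<^bsub>G\<^esub>, 1) \<in> nbrw_space G n" using oneS by (simp add: nbrw_space_def S_def)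
    have gen: "carrier G = generate G (x ` {1..n})"
    proof
      show "generate G (x ` {1..n}) \<subseteq> carrier G" using G.generate_incl[OF Xc] .
      show "carrier G \<subseteq> generate G (x ` {1..n})"
      proof
        fix h assume h: "h \<in> carrier G"
        have "(h, 1) \<in> nbrw_space G n" using oneS h by (simp add: nbrw_space_def S_def)
        then have "((\<one>\<^bsub>G\<^esub>, 1), (h, 1)) \<in> E\<^sup>*" using irr irr_iff o1 by blast
        from bk[OF this o1] show "h \<in> generate G (x ` {1..n})"
        proof
          assume "(h, 1) = (\<one>\<^bsub>G\<^esub>, 1)"
          then show ?thesis by (simp add: generate.one)
        next
          assume "\<exists>w. w \<noteq> [] \<and> red w \<and> hd w \<noteq> - snd (\<one>\<^bsub>G\<^esub>, 1::int) \<and> last w = snd (h, 1::int) \<and>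
                 fst (h, 1::int) = fst (\<one>\<^bsub>G\<^esub>, 1::int) \<otimes>\<^bsub>G\<^esub> word_eval G x w"
          then obtain w where w: "red w" "h = \<one>\<^bsub>G\<^esub> \<otimes>\<^bsub>G\<^esub> word_eval G x w" by auto
          have wS: "set w \<subseteq> signed_idx n" using w(1) by (simp add: red_def S_def)
          show ?thesis using w(2) word_eval_carrier[where G=G and n=n and x=x, OF gx wS]
            word_eval_gen[where G=G and n=n and x=x, OF gx wS] by simp
        qed
      qed
    qed
    have nf: "\<not> inj_on (word_eval G x) (reduced_words n)"
    proof
      assume inj: "inj_on (word_eval G x) (reduced_words n)"
      have "(\<one>\<^bsub>G\<^esub>, -1) \<in> nbrw_space G n" using oneS by (simp add: nbrw_space_def S_def)
      then have "((\<one>\<^bsub>G\<^esub>, 1), (\<one>\<^bsub>G\<^esub>, -1)) \<in> E\<^sup>*" using irr irr_iff o1 by blast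
      from bk[OF this o1] obtain w where w: "w \<noteq> []" "red w"
        "\<one>\<^bsub>G\<^esub> = \<one>\<^bsub>G\<^esub> \<otimes>\<^bsub>G\<^esub> word_eval G x w" by auto
      have wS: "set w \<subseteq> signed_idx n" using w(2) by (simp add: red_def S_def)
      have "word_eval G x w = word_eval G x []"
        using w(3) word_eval_carrier[where G=G and n=n and x=x, OF gx wS] by simp
      moreover have "w \<in> reduced_words n" "[] \<in> reduced_words n"
        using w(2) by (auto simp: reduced_words_alt red_def S_def)
      ultimately show False using inj w(1) by (meson inj_onD)
    qed
    show "carrier G = generate G (x ` {1..n}) \<and> \<not> freely_generated_by G n x"
      using gen nf by (simp add: freely_generated_by_def)
  next
    assume a: "carrier G = generate G (x ` {1..n}) \<and> \<not> freely_generated_by G n x"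
    then have gen: "carrier G = generate G (x ` {1..n})"
      and ninj: "\<not> inj_on (word_eval G x) (reduced_words n)"
      by (auto simp: freely_generated_by_def)
    obtain u v where uv: "u \<in> reduced_words n" "v \<in> reduced_words n" "u \<noteq> v"
      "word_eval G x u = word_eval G x v"
      using ninj unfolding inj_on_def by blast
    obtain r where r: "r \<noteq> []" "set r \<subseteq> signed_idx n" "successively (\<lambda>a b. b \<noteq> - a) r"
      "word_eval G x r = \<one>\<^bsub>G\<^esub>"
      using reduced_exists[where G=G and n=n and x=x, OF gx, of u v] uv
      by (auto simp: reduced_words_alt)
    have D: "((g, j), (g, c)) \<in> E\<^sup>*" if g: "g \<in> carrier G" and j: "j \<in> S" and c: "c \<in> S" for g j c
    proof (cases "j = c")
      case True
      then show ?thesis by simp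
    next
      case False
      have "\<not> {1, -1, 2, -2::int} \<subseteq> {c, - hd r, last r}"
      proof
        assume "{1, -1, 2, -2::int} \<subseteq> {c, - hd r, last r}"
        from card_mono[OF _ this] have "card {1, -1, 2, -2::int} \<le> card {c, - hd r, last r}" by simp
        moreover have "card {c, - hd r, last r} \<le> 3" by (simp add: card_insert_le_m1)
        ultimately show False by simp
      qed
      then obtain t where t: "t \<in> S" "t \<noteq> c" "t \<noteq> - hd r" "t \<noteq> last r"
        using oneS by blast
      define w where "w = [-c, t] @ r @ [-t, c]"
      have rS: "set r \<subseteq> S" using r(2) S_def by simp
      have nc: "-c \<in> S" "-t \<in> S" using c t(1) signed_idx_neg S_def by auto
      have s1: "successively (\<lambda>a b. b \<noteq> - a) (r @ [-t, c])"
        using r(1,3) t by (simp add: successively_append_iff)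
      have s2: "successively (\<lambda>a b. b \<noteq> - a) (t # r @ [-t, c])"
        using s1 r(1) t by (simp add: successively_Cons hd_append2)
      have rw: "red w" unfolding w_def red_def
        using rS nc c t s2 by (simp add: successively_Cons)
      have p: "((g, j), (g \<otimes>\<^bsub>G\<^esub> word_eval G x w, last w)) \<in> E\<^sup>*"
        by (rule path) (use g j rw False in \<open>auto simp: w_def\<close>)
      have lcS: "letter G x c \<in> carrier G" "letter G x t \<in> carrier G" using lc c t(1) by auto
      have ln: "letter G x (-c) = inv\<^bsub>G\<^esub> letter G x c" "letter G x (-t) = inv\<^bsub>G\<^esub> letter G x t"
        using letter_neg[where G=G and n=n and x=x, OF gx] c t(1) S_def by auto
      have rS': "set r \<subseteq> signed_idx n" "set [-t, c] \<subseteq> signed_idx n"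
        using r(2) nc c S_def by auto
      have "word_eval G x w = inv\<^bsub>G\<^esub> letter G x c \<otimes>\<^bsub>G\<^esub> (letter G x t \<otimes>\<^bsub>G\<^esub>
          (word_eval G x r \<otimes>\<^bsub>G\<^esub> (inv\<^bsub>G\<^esub> letter G x t \<otimes>\<^bsub>G\<^esub> letter G x c)))"
        unfolding w_def using word_eval_append[where G=G and n=n and x=x, OF gx rS'] ln lcS
        by simp
      also have "\<dots> = \<one>\<^bsub>G\<^esub>" using r(4) lcS by (simp add: G.m_assoc[symmetric])
      finally have "word_eval G x w = \<one>\<^bsub>G\<^esub>" .
      moreover have "last w = c" by (simp add: w_def)
      ultimately show ?thesis using p g by simp
    qed
    have M: "\<forall>g j j'. g \<in> carrier G \<longrightarrow> j \<in> S \<longrightarrow> j' \<in> S \<longrightarrow>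
        ((g, j), (g \<otimes>\<^bsub>G\<^esub> h, j')) \<in> E\<^sup>*" if "h \<in> generate G (x ` {1..n})" for h
      using that
    proof (induction rule: generate.induct)
      case one
      then show ?case using D by simp
    next
      case (incl h)
      then obtain i where i: "i \<in> {1..n}" "h = x i" by auto
      have iS: "int i \<in> S" and li: "letter G x (int i) = h" using i by (auto simp: S_def signed_idx_def letter_def)
      show ?case
      proof (intro allI impI)
        fix g j j' assume g: "g \<in> carrier G" and j: "j \<in> S" and j': "j' \<in> S"
        have "((g, j), (g, int i)) \<in> E\<^sup>*" using D g j iS by blast
        also have "((g, int i), (g \<otimes>\<^bsub>G\<^esub> h, int i)) \<in> E"
          using step[OF g iS iS] li i by simp
        also have "((g \<otimes>\<^bsub>G\<^esub> h, int i), (g \<otimes>\<^bsub>G\<^esub> h, j')) \<in> E\<^sup>*"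
          using D g iS j' lc[OF iS] li by simp
        finally show "((g, j), (g \<otimes>\<^bsub>G\<^esub> h, j')) \<in> E\<^sup>*" .
      qed
    next
      case (inv h)
      then obtain i where i: "i \<in> {1..n}" "h = x i" by auto
      have iS: "- int i \<in> S" and li: "letter G x (- int i) = inv\<^bsub>G\<^esub> h" using i
        by (auto simp: S_def signed_idx_def letter_def)
      show ?case
      proof (intro allI impI)
        fix g j j' assume g: "g \<in> carrier G" and j: "j \<in> S" and j': "j' \<in> S"
        have "((g, j), (g, - int i)) \<in> E\<^sup>*" using D g j iS by blast
        also have "((g, - int i), (g \<otimes>\<^bsub>G\<^esub> inv\<^bsub>G\<^esub> h, - int i)) \<in> E"
          using step[OF g iS iS] li i by simp
        also have "((g \<otimes>\<^bsub>G\<^esub> inv\<^bsub>G\<^esub> h, - int i), (g \<otimes>\<^bsub>G\<^esub> inv\<^bsub>G\<^esub> h, j')) \<in> E\<^sup>*"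
          using D g iS j' lc[OF iS] li by simp
        finally show "((g, j), (g \<otimes>\<^bsub>G\<^esub> inv\<^bsub>G\<^esub> h, j')) \<in> E\<^sup>*" .
      qed
    next
      case (eng h1 h2)
      have h1c: "h1 \<in> carrier G" "h2 \<in> carrier G"
        using eng.hyps G.generate_in_carrier[OF Xc] by auto
      show ?case
      proof (intro allI impI)
        fix g j j' assume g: "g \<in> carrier G" and j: "j \<in> S" and j': "j' \<in> S"
        have "((g, j), (g \<otimes>\<^bsub>G\<^esub> h1, j')) \<in> E\<^sup>*" using eng.IH(1) g j j' by blast
        also have "((g \<otimes>\<^bsub>G\<^esub> h1, j'), ((g \<otimes>\<^bsub>G\<^esub> h1) \<otimes>\<^bsub>G\<^esub> h2, j')) \<in> E\<^sup>*"
          using eng.IH(2) g h1c j' by blast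
        finally show "((g, j), (g \<otimes>\<^bsub>G\<^esub> (h1 \<otimes>\<^bsub>G\<^esub> h2), j')) \<in> E\<^sup>*"
          using g h1c by (simp add: G.m_assoc)
      qed
    qed
    show "markov_irreducible (nbrw_space G n) (nbrw_trans G x \<alpha>)"
      unfolding irr_iff
    proof (intro ballI)
      fix a b assume a: "a \<in> nbrw_space G n" and b: "b \<in> nbrw_space G n"
      obtain g j where ga: "a = (g, j)" "g \<in> carrier G" "j \<in> S"
        using a by (cases a) (auto simp: nbrw_space_def S_def)
      obtain g' j' where gb: "b = (g', j')" "g' \<in> carrier G" "j' \<in> S"
        using b by (cases b) (auto simp: nbrw_space_def S_def)
      have hg: "inv\<^bsub>G\<^esub> g \<otimes>\<^bsub>G\<^esub> g' \<in> generate G (x ` {1..n})"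
        using ga(2) gb(2) G.m_closed G.inv_closed by (metis gen)
      have "g \<otimes>\<^bsub>G\<^esub> (inv\<^bsub>G\<^esub> g \<otimes>\<^bsub>G\<^esub> g') = g'" using ga gb by (simp add: G.m_assoc[symmetric])
      then show "(a, b) \<in> E\<^sup>*" using M[OF hg] ga gb by metis
    qed
  qed
qed

end
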